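(* Let $\gamma>0$, $\gamma\neq1$ be constant. Then, as $r\to\infty$, \[ N^{\rm geom}_{\mathbb{R}}(r)=|N_1(r)-N_\gamma(r)|+O(1)=|1-\gamma|\,\frac{r}{\pi}+O(1). \]
   Context: Half-line problem: for $\lambda\neq0$, find $(u,v)$ on $[0,1]$ with $-u''-\lambda^2u=0$, $-v''-\lambda^2\gamma^2v=0$, $u(0)=v(0)=0$, $u(1)=v(1)$, $u'(1)=v'(1)$; $\lambda$ is an ITE if a nontrivial pair exists. The real ITEs are exactly the real nonzero zeros of $F(\lambda)=\gamma\sin\lambda\cos(\gamma\lambda)-\sin(\gamma\lambda)\cos\lambda$. $N^{\rm geom}_{\mathbb{R}}(r)$ is the number of real ITEs in $(0,r]$, each counted once (geometric multiplicity, which is always $1$). $N_1(r)$ is the number of Dirichlet eigenvalues $\lambda^2$ of $-d^2/dx^2$ on $(0,1)$ with $\lambda\in(0,r]$, and $N_\gamma(r)$ the same for $-\gamma^{-2}d^2/dx^2$ on $(0,1)$. *)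

theory Defs
  imports "HOL-Analysis.Analysis" "HOL-Library.Landau_Symbols"
begin

definition twice_diff_on01 :: "(real \<Rightarrow> real) \<Rightarrow> (real \<Rightarrow> real) \<Rightarrow> (real \<Rightarrow> real) \<Rightarrow> bool" where
  "twice_diff_on01 w w1 w2 \<longleftrightarrow>
     (\<forall>x\<in>{0..1}. (w has_real_derivative w1 x) (at x within {0..1}) \<and>
                 (w1 has_real_derivative w2 x) (at x within {0..1}))"

definition is_ITE :: "real \<Rightarrow> real \<Rightarrow> bool" where
  "is_ITE g l \<longleftrightarrow> l \<noteq> 0 \<and>
     (\<exists>u u' u'' v v' v''. twice_diff_on01 u u' u'' \<and> twice_diff_on01 v v' v'' \<and>
        (\<forall>x\<in>{0..1}. - u'' x - l^2 * u x = 0) \<and>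
        (\<forall>x\<in>{0..1}. - v'' x - l^2 * g^2 * v x = 0) \<and>
        u 0 = 0 \<and> v 0 = 0 \<and> u 1 = v 1 \<and> u' 1 = v' 1 \<and>
        (\<exists>x\<in>{0..1}. u x \<noteq> 0 \<or> v x \<noteq> 0))"

definition N_geom :: "real \<Rightarrow> real \<Rightarrow> nat" where
  "N_geom g r = card {l. 0 < l \<and> l \<le> r \<and> is_ITE g l}"

definition dirichlet_eig :: "real \<Rightarrow> real \<Rightarrow> bool" where
  "dirichlet_eig c \<mu> \<longleftrightarrow>
     (\<exists>u u' u''. twice_diff_on01 u u' u'' \<and>
        (\<forall>x\<in>{0..1}. - c * u'' x = \<mu> * u x) \<and>
        u 0 = 0 \<and> u 1 = 0 \<and> (\<exists>x\<in>{0..1}. u x \<noteq> 0))"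

text \<open>Number of Dirichlet eigenvalues lambda^2 of -c d^2/dx^2 with lambda in (0,r].
  N_1 = N_dir 1, N_gamma = N_dir (1/gamma^2).\<close>
definition N_dir :: "real \<Rightarrow> real \<Rightarrow> nat" where
  "N_dir c r = card {l. 0 < l \<and> l \<le> r \<and> dirichlet_eig c (l^2)}"

end

theory Submission
  imports Defs
begin


lemma ode_unique:
  fixes k :: real
  assumes td: "twice_diff_on01 u u' u''" and eq: "\<forall>x\<in>{0..1}. u'' x = - (k^2) * u x"
    and u0: "u 0 = 0" and k: "k \<noteq> 0"
  shows "\<forall>x\<in>{0..1}. u x = (u' 0 / k) * sin (k*x) \<and> u' x = u' 0 * cos (k*x)"
proof -
  define A where "A = u' 0 / k"
  define E where "E x = k^2 * (u x - A * sin (k*x))^2 + (u' x - A*k*cos (k*x))^2" for x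
  have d: "(E has_field_derivative 0) (at x within {0..1})" if x: "x \<in> {0..1}" for x
  proof -
    have du: "(u has_real_derivative u' x) (at x within {0..1})"
      and du': "(u' has_real_derivative u'' x) (at x within {0..1})"
      using td x unfolding twice_diff_on01_def by auto
    have "(E has_field_derivative
        k^2 * (2 * (u x - A * sin (k*x)) * (u' x - A * (cos (k*x) * k)))
        + 2 * (u' x - A*k*cos (k*x)) * (u'' x - A*k*(- sin (k*x) * k))) (at x within {0..1})"
      unfolding E_def
      apply (rule derivative_eq_intros du du' refl | simp)+
      by (simp add: algebra_simps power2_eq_square)
    moreover have "k^2 * (2 * (u x - A * sin (k*x)) * (u' x - A * (cos (k*x) * k)))
        + 2 * (u' x - A*k*cos (k*x)) * (u'' x - A*k*(- sin (k*x) * k)) = 0"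
      using eq x by (simp add: algebra_simps power2_eq_square)
    ultimately show ?thesis by simp
  qed
  obtain C where C: "\<forall>x\<in>{0..1}. E x = C"
    using has_field_derivative_zero_constant[OF convex_real_interval(5) d] by blast
  have "E 0 = 0" using k by (simp add: E_def u0 A_def)
  then have "C = 0" using C by auto
  show ?thesis
  proof
    fix x :: real assume x: "x \<in> {0..1}"
    have "E x = 0" using C x \<open>C = 0\<close> by auto
    then have "k^2 * (u x - A * sin (k*x))^2 = 0 \<and> (u' x - A*k*cos (k*x))^2 = 0"
      unfolding E_def by (smt (verit) zero_le_power2 mult_nonneg_nonneg)
    then show "u x = (u' 0 / k) * sin (k*x) \<and> u' x = u' 0 * cos (k*x)"
      using k by (simp add: A_def)
  qed
qed

lemma sol_td:
  "twice_diff_on01 (\<lambda>x. a * sin (k*x)) (\<lambda>x. a * k * cos (k*x)) (\<lambda>x. - a * k^2 * sin (k*x))"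
  unfolding twice_diff_on01_def
proof (intro ballI conjI)
  fix x :: real
  show "((\<lambda>x. a * sin (k*x)) has_real_derivative a * k * cos (k*x)) (at x within {0..1})"
    by (rule derivative_eq_intros refl | simp)+
  show "((\<lambda>x. a * k * cos (k*x)) has_real_derivative - a * k^2 * sin (k*x)) (at x within {0..1})"
    by (rule derivative_eq_intros refl | simp)+ (simp add: power2_eq_square)
qed

lemma sin_nz_point:
  fixes k :: real assumes "k \<noteq> 0"
  shows "\<exists>x\<in>{0..1}. sin (k*x) \<noteq> 0"
proof -
  define x where "x = min 1 (pi / (2 * \<bar>k\<bar>))"
  have x0: "0 < x" "x \<le> 1" using assms by (auto simp: x_def)
  have "\<bar>k*x\<bar> \<le> \<bar>k\<bar> * (pi / (2 * \<bar>k\<bar>))"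
  proof -
    have "x \<le> pi / (2 * \<bar>k\<bar>)" by (simp add: x_def)
    then have "\<bar>k\<bar> * x \<le> \<bar>k\<bar> * (pi / (2 * \<bar>k\<bar>))" by (rule mult_left_mono) simp
    then show ?thesis using x0 by (simp add: abs_mult)
  qed
  also have "\<dots> = pi/2" using assms by simp
  finally have b: "\<bar>k*x\<bar> \<le> pi/2" .
  have nz: "k*x \<noteq> 0" using x0 assms by simp
  have "sin (k*x) \<noteq> 0"
  proof
    assume "sin (k*x) = 0"
    then obtain i :: int where i: "k*x = of_int i * pi" by (auto simp: sin_zero_iff_int2)
    then have "i \<noteq> 0" using nz by auto
    then have "1 \<le> \<bar>of_int i :: real\<bar>" by linarith
    then have "pi \<le> \<bar>of_int i * pi\<bar>" by (simp add: abs_mult)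
    with b i show False using pi_gt_zero by linarith
  qed
  then show ?thesis using x0 by auto
qed

definition Ff :: "real \<Rightarrow> real \<Rightarrow> real" where
  "Ff g l = g * sin l * cos (g*l) - sin (g*l) * cos l"

lemma ITE_iff:
  assumes g: "g > 0"
  shows "is_ITE g l \<longleftrightarrow> l \<noteq> 0 \<and> Ff g l = 0"
proof
  assume "is_ITE g l"
  then obtain u u' u'' v v' v'' where l: "l \<noteq> 0" and tu: "twice_diff_on01 u u' u''"
    and tv: "twice_diff_on01 v v' v''"
    and eu: "\<forall>x\<in>{0..1}. - u'' x - l^2 * u x = 0"
    and ev: "\<forall>x\<in>{0..1}. - v'' x - l^2 * g^2 * v x = 0"
    and bc: "u 0 = 0" "v 0 = 0" "u 1 = v 1" "u' 1 = v' 1"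
    and nt: "\<exists>x\<in>{0..1}. u x \<noteq> 0 \<or> v x \<noteq> 0"
    unfolding is_ITE_def by blast
  have eu': "\<forall>x\<in>{0..1}. u'' x = - (l^2) * u x" using eu by (auto simp: algebra_simps)
  have ev': "\<forall>x\<in>{0..1}. v'' x = - ((l*g)^2) * v x" using ev by (auto simp: algebra_simps power_mult_distrib)
  have lg: "l*g \<noteq> 0" using l g by simp
  note U = ode_unique[OF tu eu' bc(1) l]
  note V = ode_unique[OF tv ev' bc(2) lg]
  define a where "a = u' 0 / l"
  define b where "b = v' 0 / (l*g)"
  have U1: "u 1 = a * sin l" "u' 1 = a * l * cos l" using U[rule_format, of 1] l by (simp_all add: a_def)
  have V1: "v 1 = b * sin (g*l)" "v' 1 = b * (l*g) * cos (g*l)" using V[rule_format, of 1] lg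
    by (simp_all add: b_def mult.commute)
  have e1: "a * sin l = b * sin (g*l)" using U1 V1 bc by simp
  have e2: "a * cos l = b * g * cos (g*l)" using U1(2) V1(2) bc(4) l by (simp add: algebra_simps)
  have ab: "a \<noteq> 0 \<or> b \<noteq> 0"
  proof (rule ccontr)
    assume "\<not> (a \<noteq> 0 \<or> b \<noteq> 0)"
    then have a0: "u' 0 / l = 0" and b0: "v' 0 / (l*g) = 0" by (auto simp: a_def b_def)
    obtain x where x: "x \<in> {0..1}" "u x \<noteq> 0 \<or> v x \<noteq> 0" using nt by blast
    have "u x = u' 0 / l * sin (l*x)" "v x = v' 0 / (l*g) * sin ((l*g)*x)"
      using U[rule_format, OF x(1)] V[rule_format, OF x(1)] by auto
    then show False using x(2) a0 b0 by simp
  qed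
  have "a * Ff g l = 0"
  proof -
    have "a * Ff g l = g * cos (g*l) * (a * sin l) - sin (g*l) * (a * cos l)"
      by (simp add: Ff_def algebra_simps)
    also have "\<dots> = 0" unfolding e1 e2 by (simp add: algebra_simps)
    finally show ?thesis .
  qed
  moreover have "b * Ff g l = 0"
  proof -
    have "b * Ff g l = sin l * (b * g * cos (g*l)) - cos l * (b * sin (g*l))"
      by (simp add: Ff_def algebra_simps)
    also have "\<dots> = 0" unfolding e1[symmetric] e2[symmetric] by (simp add: algebra_simps)
    finally show ?thesis .
  qed
  ultimately show "l \<noteq> 0 \<and> Ff g l = 0" using ab l by auto
next
  assume "l \<noteq> 0 \<and> Ff g l = 0"
  then have l: "l \<noteq> 0" and F: "Ff g l = 0" by auto
  have lg: "l*g \<noteq> 0" using l g by simp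
  obtain a b where e1: "a * sin l = b * sin (g*l)" and e2: "a * cos l = b * g * cos (g*l)"
    and ab: "a \<noteq> 0 \<or> b \<noteq> 0"
  proof (cases "sin (g*l) = 0 \<and> sin l = 0")
    case True
    then have "cos (g*l) \<noteq> 0" "cos l \<noteq> 0" using sin_cos_squared_add[of "g*l"] sin_cos_squared_add[of l]
      by auto
    show ?thesis
      apply (rule that[of "g * cos (g*l)" "cos l"])
      using True F g \<open>cos l \<noteq> 0\<close> by (auto simp: Ff_def algebra_simps)
  next
    case False
    show ?thesis
      apply (rule that[of "sin (g*l)" "sin l"])
      using False F by (auto simp: Ff_def algebra_simps)
  qed
  let ?u = "\<lambda>x. a * sin (l*x)" and ?u' = "\<lambda>x. a * l * cos (l*x)" and ?u'' = "\<lambda>x. - a * l^2 * sin (l*x)"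
  let ?v = "\<lambda>x. b * sin ((l*g)*x)" and ?v' = "\<lambda>x. b * (l*g) * cos ((l*g)*x)"
    and ?v'' = "\<lambda>x. - b * (l*g)^2 * sin ((l*g)*x)"
  have nt: "\<exists>x\<in>{0..1}. ?u x \<noteq> 0 \<or> ?v x \<noteq> 0"
    using ab sin_nz_point[OF l] sin_nz_point[OF lg] by auto
  have "twice_diff_on01 ?u ?u' ?u'' \<and> twice_diff_on01 ?v ?v' ?v'' \<and>
        (\<forall>x\<in>{0..1}. - ?u'' x - l^2 * ?u x = 0) \<and>
        (\<forall>x\<in>{0..1}. - ?v'' x - l^2 * g^2 * ?v x = 0) \<and>
        ?u 0 = 0 \<and> ?v 0 = 0 \<and> ?u 1 = ?v 1 \<and> ?u' 1 = ?v' 1 \<and>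
        (\<exists>x\<in>{0..1}. ?u x \<noteq> 0 \<or> ?v x \<noteq> 0)"
    using sol_td[of a l] sol_td[of b "l*g"] nt e1 e2
    by (auto simp: algebra_simps power_mult_distrib)
  then show "is_ITE g l" unfolding is_ITE_def using l by blast
qed

lemma dir_iff:
  assumes c: "c > 0" and l: "l > 0"
  shows "dirichlet_eig c (l^2) \<longleftrightarrow> sin (l / sqrt c) = 0"
proof -
  define k where "k = l / sqrt c"
  have k: "k \<noteq> 0" using c l by (simp add: k_def)
  have k2: "k^2 = l^2 / c" using c by (simp add: k_def power_divide)
  show ?thesis
  proof
    assume "dirichlet_eig c (l^2)"
    then obtain u u' u'' where tu: "twice_diff_on01 u u' u''"
      and e: "\<forall>x\<in>{0..1}. - c * u'' x = l^2 * u x" and bc: "u 0 = 0" "u 1 = 0"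
      and nt: "\<exists>x\<in>{0..1}. u x \<noteq> 0" unfolding dirichlet_eig_def by blast
    have e': "\<forall>x\<in>{0..1}. u'' x = - (k^2) * u x" using e c unfolding k2
      by (auto simp: field_simps)
    note U = ode_unique[OF tu e' bc(1) k]
    have "u' 0 / k \<noteq> 0"
    proof
      assume h: "u' 0 / k = 0"
      obtain x where x: "x \<in> {0..1}" "u x \<noteq> 0" using nt by blast
      have "u x = u' 0 / k * sin (k*x)" using U[rule_format, OF x(1)] by auto
      then show False using h x(2) by simp
    qed
    moreover have "u' 0 / k * sin k = 0" using U[rule_format, of 1] bc by simp
    ultimately show "sin (l / sqrt c) = 0" by (simp add: k_def)
  next
    assume s: "sin (l / sqrt c) = 0"
    have "twice_diff_on01 (\<lambda>x. 1 * sin (k*x)) (\<lambda>x. 1 * k * cos (k*x)) (\<lambda>x. - 1 * k^2 * sin (k*x))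
      \<and> (\<forall>x\<in>{0..1}. - c * (- 1 * k^2 * sin (k*x)) = l^2 * (1 * sin (k*x)))
      \<and> 1 * sin (k*0) = 0 \<and> 1 * sin (k*1) = 0 \<and> (\<exists>x\<in>{0..1}. 1 * sin (k*x) \<noteq> 0)"
      using sol_td[of 1 k] sin_nz_point[OF k] s c unfolding k2 by (auto simp: k_def)
    then show "dirichlet_eig c (l^2)" unfolding dirichlet_eig_def by blast
  qed
qed



lemma count_zeros:
  fixes h :: "real \<Rightarrow> real"
  assumes mono: "\<And>a b. 0 \<le> a \<Longrightarrow> a < b \<Longrightarrow> h a < h b"
    and cont: "continuous_on {0..} h" and h0: "h 0 = 0" and r: "r \<ge> 0"
  shows "card {l. 0 < l \<and> l \<le> r \<and> sin (h l) = 0} = nat \<lfloor>h r / pi\<rfloor>"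
proof -
  define S where "S = {l. 0 < l \<and> l \<le> r \<and> sin (h l) = 0}"
  define f where "f l = round (h l / pi)" for l
  have key: "h l = of_int (f l) * pi \<and> 1 \<le> f l \<and> f l \<le> \<lfloor>h r / pi\<rfloor>" if l: "l \<in> S" for l
  proof -
    from l have l0: "0 < l" "l \<le> r" "sin (h l) = 0" by (auto simp: S_def)
    then obtain i :: int where i: "h l = of_int i * pi" by (auto simp: sin_zero_iff_int2)
    have fi: "f l = i" using i by (simp add: f_def)
    have "h 0 < h l" using mono[of 0 l] l0 by simp
    then have "0 < of_int i * pi" using i h0 by simp
    then have "0 < i" by (simp add: zero_less_mult_iff)
    have "h l \<le> h r" using mono[of l r] l0 by (cases "l = r") auto
    then have "of_int i \<le> h r / pi" using i by (simp add: field_simps)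
    then have "i \<le> \<lfloor>h r / pi\<rfloor>" by (simp add: le_floor_iff)
    then show ?thesis using i fi \<open>0 < i\<close> by simp
  qed
  have inj: "inj_on f S"
  proof (rule inj_onI)
    fix a b assume a: "a \<in> S" and b: "b \<in> S" and e: "f a = f b"
    have "h a = h b" using key[OF a] key[OF b] e by simp
    moreover have "0 \<le> a" "0 \<le> b" using a b by (auto simp: S_def)
    ultimately show "a = b" using mono[of a b] mono[of b a] by (cases a b rule: linorder_cases) auto
  qed
  have img: "f ` S = {1..\<lfloor>h r / pi\<rfloor>}"
  proof
    show "f ` S \<subseteq> {1..\<lfloor>h r / pi\<rfloor>}" using key by auto
  next
    show "{1..\<lfloor>h r / pi\<rfloor>} \<subseteq> f ` S"
    proof
      fix i assume i: "i \<in> {1..\<lfloor>h r / pi\<rfloor>}"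
      then have "of_int i \<le> h r / pi" by (simp add: le_floor_iff)
      then have le: "of_int i * pi \<le> h r" by (simp add: field_simps)
      have pos: "0 < of_int i * pi" using i by simp
      have "continuous_on {0..r} h" using cont by (rule continuous_on_subset) auto
      then obtain l where l: "0 \<le> l" "l \<le> r" "h l = of_int i * pi"
        using IVT'[of h 0 "of_int i * pi" r] h0 pos le r by auto
      have "l \<noteq> 0" using l pos h0 by auto
      then have "l \<in> S" using l by (auto simp: S_def sin_zero_iff_int2)
      moreover have "f l = i" using l by (simp add: f_def)
      ultimately show "i \<in> f ` S" by force
    qed
  qed
  have "card S = card (f ` S)" using inj by (simp add: card_image)
  also have "\<dots> = nat \<lfloor>h r / pi\<rfloor>" unfolding img by simp
  finally show ?thesis by (simp add: S_def)
qed



definition Dd :: "real \<Rightarrow> real \<Rightarrow> real" where "Dd g t = g * (cos t)^2 + (sin t)^2"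
definition Nn :: "real \<Rightarrow> real \<Rightarrow> real" where "Nn g t = (1 - g) * sin t * cos t"
definition Rr :: "real \<Rightarrow> real \<Rightarrow> real" where "Rr g t = g^2 * (cos t)^2 + (sin t)^2"

lemma Dd_pos: "g > 0 \<Longrightarrow> Dd g t > 0"
proof -
  assume g: "g > 0"
  have "min g 1 * (cos t)^2 \<le> g * (cos t)^2" by (rule mult_right_mono) auto
  moreover have "min g 1 * (sin t)^2 \<le> (sin t)^2" using mult_right_mono[of "min g 1" 1 "(sin t)^2"] by simp
  moreover have "min g 1 * (cos t)^2 + min g 1 * (sin t)^2 = min g 1"
    by (metis distrib_left sin_cos_squared_add2 mult_1_right)
  ultimately have "min g 1 \<le> Dd g t" unfolding Dd_def by linarith
  then show ?thesis using g by simp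
qed

lemma Rr_pos: "g > 0 \<Longrightarrow> Rr g t > 0"
  using Dd_pos[of "g^2" t] by (simp add: Rr_def Dd_def)

lemma DN_alg: "(g * c^2 + s^2)^2 + ((1 - g) * s * c)^2 = (g^2 * c^2 + s^2) * (s^2 + c^2)"
  for g s c :: real by (simp add: algebra_simps power2_eq_square)

lemma DN_sq: "(Dd g t)^2 + (Nn g t)^2 = Rr g t"
proof -
  have "(Dd g t)^2 + (Nn g t)^2 = Rr g t * ((sin t)^2 + (cos t)^2)"
    unfolding Dd_def Nn_def Rr_def by (rule DN_alg)
  then show ?thesis by simp
qed

lemma Nn_deriv: "(Nn g has_real_derivative (1 - g) * ((cos t)^2 - (sin t)^2)) (at t)"
  unfolding Nn_def[abs_def]
  by (rule derivative_eq_intros refl | simp add: algebra_simps power2_eq_square)+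

lemma Dd_deriv: "(Dd g has_real_derivative 2 * (1 - g) * sin t * cos t) (at t)"
  unfolding Dd_def[abs_def]
  by (rule derivative_eq_intros refl | simp add: algebra_simps power2_eq_square)+

lemma num_alg: "(1 - g) * (c^2 - s^2) * (g * c^2 + s^2) - (1 - g) * s * c * (2 * (1 - g) * s * c)
       = (1 - g) * (g * c^2 - s^2) * (s^2 + c^2)" for g s c :: real
  by (simp add: algebra_simps power2_eq_square)

lemma deriv_a:
  assumes g: "g > 0"
  shows "((\<lambda>t. arctan (Nn g t / Dd g t)) has_real_derivative
           (1 - g) * (g * (cos t)^2 - (sin t)^2) / Rr g t) (at t)"
proof -
  have D: "Dd g t \<noteq> 0" using Dd_pos[OF g, of t] by linarith
  have R: "Rr g t \<noteq> 0" using Rr_pos[OF g, of t] by linarith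
  have inv: "inverse (1 + (Nn g t / Dd g t)^2) = (Dd g t)^2 / Rr g t"
  proof -
    have "1 + (Nn g t / Dd g t)^2 = ((Dd g t)^2 + (Nn g t)^2) / (Dd g t)^2"
      using D by (simp add: add_divide_distrib power_divide)
    then show ?thesis by (simp add: DN_sq)
  qed
  have num: "(1 - g) * ((cos t)^2 - (sin t)^2) * Dd g t - Nn g t * (2 * (1 - g) * sin t * cos t)
       = (1 - g) * (g * (cos t)^2 - (sin t)^2) * ((sin t)^2 + (cos t)^2)"
    unfolding Nn_def Dd_def by (rule num_alg)
  have "((\<lambda>t. arctan (Nn g t / Dd g t)) has_real_derivative
     inverse (1 + (Nn g t / Dd g t)^2) *
       (((1 - g) * ((cos t)^2 - (sin t)^2) * Dd g t - Nn g t * (2 * (1 - g) * sin t * cos t))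
         / (Dd g t * Dd g t))) (at t)"
    by (rule derivative_eq_intros Nn_deriv Dd_deriv D refl)+
  moreover have "inverse (1 + (Nn g t / Dd g t)^2) *
       (((1 - g) * ((cos t)^2 - (sin t)^2) * Dd g t - Nn g t * (2 * (1 - g) * sin t * cos t))
         / (Dd g t * Dd g t)) = (1 - g) * (g * (cos t)^2 - (sin t)^2) / Rr g t"
    unfolding inv num using D R by (simp add: field_simps power2_eq_square)
  ultimately show ?thesis by simp
qed

definition ph :: "real \<Rightarrow> real \<Rightarrow> real" where
  "ph g l = l - g * l - arctan (Nn g (g*l) / Dd g (g*l))"
definition sg :: "real \<Rightarrow> real" where "sg g = (if g < 1 then 1 else -1)"
definition GG :: "real \<Rightarrow> real \<Rightarrow> real" where "GG g l = sg g * ph g l"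

lemma ph_deriv:
  assumes g: "g > 0"
  shows "(ph g has_real_derivative (1 - g^2) * (sin (g*l))^2 / Rr g (g*l)) (at l)"
proof -
  have R: "Rr g (g*l) \<noteq> 0" using Rr_pos[OF g, of "g*l"] by linarith
  have a: "((\<lambda>l. arctan (Nn g (g*l) / Dd g (g*l))) has_real_derivative
      (1 - g) * (g * (cos (g*l))^2 - (sin (g*l))^2) / Rr g (g*l) * g) (at l)"
    by (rule DERIV_chain2[OF deriv_a[OF g]]) (rule derivative_eq_intros refl | simp)+
  have "(ph g has_real_derivative 1 - g * 1 - (1 - g) * (g * (cos (g*l))^2 - (sin (g*l))^2) / Rr g (g*l) * g) (at l)"
  proof -
    have "((\<lambda>l. l - g * l) has_real_derivative 1 - g * 1) (at l)"
      by (rule derivative_eq_intros refl | simp)+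
    from DERIV_diff[OF this a] show ?thesis unfolding ph_def[abs_def] by simp
  qed
  moreover have "1 - g * 1 - (1 - g) * (g * (cos (g*l))^2 - (sin (g*l))^2) / Rr g (g*l) * g
     = (1 - g^2) * (sin (g*l))^2 / Rr g (g*l)"
    using R unfolding Rr_def by (simp add: field_simps) (simp add: algebra_simps power2_eq_square)
  ultimately show ?thesis by simp
qed

lemma GG_deriv:
  assumes g: "g > 0"
  shows "(GG g has_real_derivative \<bar>1 - g\<bar> * (1 + g) * (sin (g*l))^2 / Rr g (g*l)) (at l)"
proof -
  have "(GG g has_real_derivative sg g * ((1 - g^2) * (sin (g*l))^2 / Rr g (g*l))) (at l)"
    unfolding GG_def[abs_def] by (rule DERIV_cmult[OF ph_deriv[OF g]])
  moreover have "sg g * ((1 - g^2) * (sin (g*l))^2 / Rr g (g*l)) = \<bar>1 - g\<bar> * (1 + g) * (sin (g*l))^2 / Rr g (g*l)"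
  proof -
    have e: "sg g * (1 - g^2) = \<bar>1 - g\<bar> * (1 + g)"
      by (simp add: sg_def power2_eq_square algebra_simps abs_if)
    have "sg g * ((1 - g^2) * (sin (g*l))^2 / Rr g (g*l)) = (sg g * (1 - g^2)) * (sin (g*l))^2 / Rr g (g*l)"
      by simp
    then show ?thesis unfolding e .
  qed
  ultimately show ?thesis by metis
qed

lemma GG_cont: "g > 0 \<Longrightarrow> continuous_on S (GG g)"
  by (rule DERIV_continuous_on, rule has_field_derivative_at_within, rule GG_deriv)

lemma GG_mono_le:
  assumes g: "g > 0" and ab: "a \<le> b"
  shows "GG g a \<le> GG g b"
proof (rule DERIV_nonneg_imp_increasing_open[OF ab])
  fix x
  have "0 \<le> \<bar>1 - g\<bar> * (1 + g) * (sin (g*x))^2 / Rr g (g*x)"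
    using Rr_pos[OF g, of "g*x"] g by simp
  then show "\<exists>y. (GG g has_real_derivative y) (at x) \<and> 0 \<le> y" using GG_deriv[OF g] by blast
qed (rule GG_cont[OF g])

lemma sin_nz_between:
  assumes "of_int k * pi < x" "x < (of_int k + 1) * pi"
  shows "sin x \<noteq> 0"
proof
  assume "sin x = 0"
  then obtain i :: int where i: "x = of_int i * pi" by (auto simp: sin_zero_iff_int2)
  then have "of_int k < (of_int i :: real)" "(of_int i :: real) < of_int k + 1" using assms by auto
  then have "k < i" "i < k + 1" by linarith+
  then show False by simp
qed

lemma GG_mono:
  assumes g: "g > 0" and g1: "g \<noteq> 1" and ab: "a < b"
  shows "GG g a < GG g b"
proof -
  define k where "k = \<lfloor>g * a / pi\<rfloor>"
  define d where "d = min b ((of_int k + 1) * pi / g)"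
  have ka: "of_int k * pi \<le> g * a" "g * a < (of_int k + 1) * pi"
  proof -
    have "of_int k \<le> g * a / pi" "g * a / pi < of_int k + 1" unfolding k_def by linarith+
    then show "of_int k * pi \<le> g * a" "g * a < (of_int k + 1) * pi" by (simp_all add: field_simps)
  qed
  have "a < (of_int k + 1) * pi / g" using ka(2) g by (simp add: field_simps)
  then have ad: "a < d" using ab by (simp add: d_def)
  have "GG g a < GG g d"
  proof (rule DERIV_pos_imp_increasing_open[OF ad])
    fix x assume x: "a < x" "x < d"
    have "g * a < g * x" using x g by simp
    moreover have "g * x < (of_int k + 1) * pi"
    proof -
      have "x < (of_int k + 1) * pi / g" using x by (simp add: d_def)
      then show ?thesis using g by (simp add: field_simps)
    qed
    ultimately have "sin (g*x) \<noteq> 0" using ka by (intro sin_nz_between[of k]) auto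
    moreover have "\<bar>1 - g\<bar> > 0" using g1 by simp
    ultimately have "0 < \<bar>1 - g\<bar> * (1 + g) * (sin (g*x))^2 / Rr g (g*x)"
      using Rr_pos[OF g, of "g*x"] g by simp
    then show "\<exists>y. (GG g has_real_derivative y) (at x) \<and> 0 < y" using GG_deriv[OF g] by blast
  qed (rule GG_cont[OF g])
  also have "GG g d \<le> GG g b" using GG_mono_le[OF g] by (simp add: d_def)
  finally show ?thesis .
qed

lemma GG_0: "GG g 0 = 0"
  by (simp add: GG_def ph_def Nn_def)

lemma GG_bound: "\<bar>GG g r - \<bar>1 - g\<bar> * r\<bar> < pi / 2"
proof -
  have "GG g r - \<bar>1 - g\<bar> * r = - sg g * arctan (Nn g (g*r) / Dd g (g*r))"
    by (simp add: GG_def ph_def sg_def algebra_simps)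
  then show ?thesis using arctan_bounded[of "Nn g (g*r) / Dd g (g*r)"] by (auto simp: sg_def)
qed

lemma trig_alg1: "c * (g * c^2 + s^2) - s * ((1 - g) * s * c) = g * c * (s^2 + c^2)"
  for g s c :: real by (simp add: algebra_simps power2_eq_square)
lemma trig_alg2: "s * (g * c^2 + s^2) + c * ((1 - g) * s * c) = s * (s^2 + c^2)"
  for g s c :: real by (simp add: algebra_simps power2_eq_square)

lemma Ff_ph:
  assumes g: "g > 0"
  shows "g * sin l * cos (g*l) - sin (g*l) * cos l = sqrt (Rr g (g*l)) * sin (ph g l)"
proof -
  define t where "t = g * l"
  define D where "D = Dd g t"
  define N where "N = Nn g t"
  define a where "a = arctan (N / D)"
  define R where "R = Rr g t"
  have D: "D > 0" using Dd_pos[OF g] by (simp add: D_def)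
  have R: "R > 0" using Rr_pos[OF g] by (simp add: R_def)
  have "1 + (N / D)^2 = (D^2 + N^2) / D^2"
    using D by (simp add: add_divide_distrib power_divide)
  also have "\<dots> = R / D^2" by (simp add: D_def N_def R_def DN_sq)
  finally have sq: "sqrt (1 + (N / D)^2) = sqrt R / D" using D by (simp add: real_sqrt_divide)
  have ca: "cos a = D / sqrt R" unfolding a_def cos_arctan sq using D R by simp
  have sa: "sin a = N / sqrt R" unfolding a_def sin_arctan sq using D R by simp
  have ct: "cos (t + a) = g * cos t / sqrt R"
  proof -
    have "cos (t + a) = (cos t * D - sin t * N) / sqrt R" by (simp add: cos_add ca sa diff_divide_distrib)
    also have "cos t * D - sin t * N = g * cos t" using trig_alg1[of "cos t" g "sin t"]
      by (simp add: D_def N_def Dd_def Nn_def)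
    finally show ?thesis .
  qed
  have st: "sin (t + a) = sin t / sqrt R"
  proof -
    have "sin (t + a) = (sin t * D + cos t * N) / sqrt R" by (simp add: sin_add ca sa add_divide_distrib)
    also have "sin t * D + cos t * N = sin t" using trig_alg2[of "sin t" g "cos t"]
      by (simp add: D_def N_def Dd_def Nn_def)
    finally show ?thesis .
  qed
  have "ph g l = l - (t + a)" by (simp add: ph_def t_def a_def N_def D_def)
  then have "sin (ph g l) = sin l * cos (t + a) - cos l * sin (t + a)" by (simp add: sin_diff)
  also have "\<dots> = (g * sin l * cos t - sin t * cos l) / sqrt R" unfolding ct st using R by (simp add: field_simps)
  finally show ?thesis using R by (simp add: t_def R_def)
qed


lemma ITE_sin_iff:
  assumes g: "g > 0"
  shows "is_ITE g l \<longleftrightarrow> l \<noteq> 0 \<and> sin (GG g l) = 0"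
proof -
  have R: "sqrt (Rr g (g*l)) > 0" using Rr_pos[OF g] by simp
  have "sin (GG g l) = 0 \<longleftrightarrow> sin (ph g l) = 0"
    by (simp add: GG_def sg_def)
  also have "\<dots> \<longleftrightarrow> Ff g l = 0" using R by (simp add: Ff_def Ff_ph[OF g])
  finally show ?thesis using ITE_iff[OF g] by simp
qed

lemma Ngeom_eq:
  assumes g: "g > 0" and g1: "g \<noteq> 1" and r: "r \<ge> 0"
  shows "N_geom g r = nat \<lfloor>GG g r / pi\<rfloor>"
proof -
  have "{l. 0 < l \<and> l \<le> r \<and> is_ITE g l} = {l. 0 < l \<and> l \<le> r \<and> sin (GG g l) = 0}"
    using ITE_sin_iff[OF g] by auto
  moreover have "card {l. 0 < l \<and> l \<le> r \<and> sin (GG g l) = 0} = nat \<lfloor>GG g r / pi\<rfloor>"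
    by (rule count_zeros[OF GG_mono[OF g g1] GG_cont[OF g] GG_0 r])
  ultimately show ?thesis by (simp add: N_geom_def)
qed

lemma Ndir1_eq:
  assumes r: "r \<ge> 0"
  shows "N_dir 1 r = nat \<lfloor>r / pi\<rfloor>"
proof -
  have "{l. 0 < l \<and> l \<le> r \<and> dirichlet_eig 1 (l^2)} = {l. 0 < l \<and> l \<le> r \<and> sin l = 0}"
    using dir_iff[of 1] by auto
  moreover have "card {l. 0 < l \<and> l \<le> r \<and> sin ((\<lambda>l. l) l) = 0} = nat \<lfloor>(\<lambda>l. l) r / pi\<rfloor>"
    by (rule count_zeros) (auto simp: r)
  ultimately show ?thesis by (simp add: N_dir_def)
qed

lemma Ndirg_eq:
  assumes g: "g > 0" and r: "r \<ge> 0"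
  shows "N_dir (1 / g^2) r = nat \<lfloor>g * r / pi\<rfloor>"
proof -
  have s: "sqrt (1 / g^2) = 1 / g" using g by (simp add: real_sqrt_divide)
  have "{l. 0 < l \<and> l \<le> r \<and> dirichlet_eig (1 / g^2) (l^2)} = {l. 0 < l \<and> l \<le> r \<and> sin (g * l) = 0}"
    using dir_iff[of "1 / g^2"] g unfolding s by (auto simp: mult.commute)
  moreover have "card {l. 0 < l \<and> l \<le> r \<and> sin ((\<lambda>l. g * l) l) = 0} = nat \<lfloor>(\<lambda>l. g * l) r / pi\<rfloor>"
    by (rule count_zeros) (auto simp: r g intro!: continuous_intros)
  ultimately show ?thesis by (simp add: N_dir_def)
qed

lemma arith_fact:
  fixes X A B u a b :: real
  assumes "u - 1 < X" "X \<le> u" "a - 1 < A" "A \<le> a" "b - 1 < B" "B \<le> b"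
    "\<bar>u - \<bar>a - b\<bar>\<bar> < 1/2"
  shows "\<bar>X - \<bar>A - B\<bar>\<bar> \<le> 3 \<and> \<bar>\<bar>A - B\<bar> - \<bar>a - b\<bar>\<bar> \<le> 3"
proof -
  have d: "\<bar>(A - B) - (a - b)\<bar> < 1" using assms(3-6) by (simp add: abs_less_iff)
  have e: "\<bar>\<bar>A - B\<bar> - \<bar>a - b\<bar>\<bar> \<le> \<bar>(A - B) - (a - b)\<bar>" by (rule abs_triangle_ineq3)
  have f: "\<bar>X - u\<bar> \<le> 1" using assms(1,2) by (simp add: abs_le_iff)
  have "\<bar>X - \<bar>A - B\<bar>\<bar> \<le> \<bar>X - u\<bar> + \<bar>u - \<bar>a - b\<bar>\<bar> + \<bar>\<bar>A - B\<bar> - \<bar>a - b\<bar>\<bar>"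
    by (simp add: abs_le_iff abs_if)
  then show ?thesis using d e f assms(7) by linarith
qed

theorem theorem2:
  fixes \<gamma> :: real
  assumes "\<gamma> > 0" and "\<gamma> \<noteq> 1"
  shows "(\<lambda>r. real (N_geom \<gamma> r) - \<bar>real (N_dir 1 r) - real (N_dir (1 / \<gamma>^2) r)\<bar>)
            \<in> O[at_top](\<lambda>_. 1)
       \<and> (\<lambda>r. \<bar>real (N_dir 1 r) - real (N_dir (1 / \<gamma>^2) r)\<bar> - \<bar>1 - \<gamma>\<bar> * r / pi)
            \<in> O[at_top](\<lambda>_. 1)"
proof -
  have main: "\<bar>real (N_geom \<gamma> r) - \<bar>real (N_dir 1 r) - real (N_dir (1 / \<gamma>^2) r)\<bar>\<bar> \<le> 3
     \<and> \<bar>\<bar>real (N_dir 1 r) - real (N_dir (1 / \<gamma>^2) r)\<bar> - \<bar>1 - \<gamma>\<bar> * r / pi\<bar> \<le> 3"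
    if r: "r \<ge> 0" for r
  proof -
    define G where "G = GG \<gamma> r"
    have G0: "0 \<le> G" using GG_mono_le[OF assms(1) r] GG_0 by (simp add: G_def)
    have Gb: "\<bar>G - \<bar>1 - \<gamma>\<bar> * r\<bar> < pi / 2" using GG_bound by (simp add: G_def)
    have Gb': "\<bar>G / pi - \<bar>1 - \<gamma>\<bar> * r / pi\<bar> < 1 / 2"
    proof -
      have "\<bar>G / pi - \<bar>1 - \<gamma>\<bar> * r / pi\<bar> = \<bar>G - \<bar>1 - \<gamma>\<bar> * r\<bar> / pi"
        by (simp add: diff_divide_distrib[symmetric])
      also have "\<dots> < (pi / 2) / pi" using Gb by (intro divide_strict_right_mono) auto
      finally show ?thesis by simp
    qed
    have X: "real (N_geom \<gamma> r) = of_int \<lfloor>G / pi\<rfloor>"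
      using Ngeom_eq[OF assms r] G0 by (simp add: G_def)
    have A: "real (N_dir 1 r) = of_int \<lfloor>r / pi\<rfloor>" using Ndir1_eq[OF r] r by simp
    have B: "real (N_dir (1 / \<gamma>^2) r) = of_int \<lfloor>\<gamma> * r / pi\<rfloor>"
      using Ndirg_eq[OF assms(1) r] r assms(1) by simp
    have ab: "\<bar>1 - \<gamma>\<bar> * r / pi = \<bar>r / pi - \<gamma> * r / pi\<bar>"
    proof -
      have "r / pi - \<gamma> * r / pi = (1 - \<gamma>) * (r / pi)" by (simp add: algebra_simps diff_divide_distrib)
      then show ?thesis using r by (simp add: abs_mult)
    qed
    have f1: "G / pi - 1 < of_int \<lfloor>G / pi\<rfloor>" "of_int \<lfloor>G / pi\<rfloor> \<le> G / pi" by linarith+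
    have f2: "r / pi - 1 < of_int \<lfloor>r / pi\<rfloor>" "of_int \<lfloor>r / pi\<rfloor> \<le> r / pi" by linarith+
    have f3: "\<gamma> * r / pi - 1 < of_int \<lfloor>\<gamma> * r / pi\<rfloor>" "of_int \<lfloor>\<gamma> * r / pi\<rfloor> \<le> \<gamma> * r / pi" by linarith+
    show ?thesis unfolding X A B ab using arith_fact[OF f1 f2 f3 Gb'[unfolded ab]] by simp
  qed
  have ev: "eventually (\<lambda>r. r \<ge> (0::real)) at_top" by (rule eventually_ge_at_top)
  show ?thesis
  proof
    show "(\<lambda>r. real (N_geom \<gamma> r) - \<bar>real (N_dir 1 r) - real (N_dir (1 / \<gamma>^2) r)\<bar>) \<in> O[at_top](\<lambda>_. 1)"
      apply (rule bigoI[where c = 3])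
      apply (rule eventually_mono[OF ev])
      using main by auto
    show "(\<lambda>r. \<bar>real (N_dir 1 r) - real (N_dir (1 / \<gamma>^2) r)\<bar> - \<bar>1 - \<gamma>\<bar> * r / pi) \<in> O[at_top](\<lambda>_. 1)"
      apply (rule bigoI[where c = 3])
      apply (rule eventually_mono[OF ev])
      using main by auto
  qed
qed

end
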